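(* Let $r,s\in(0,1)$ satisfy \[s = 2r(1-r)\qquad\text{and}\qquad r = 3s(1-s)^2 + 3s^2(1-s).\] Then the product measures $\mu_r$ and $\mu_s$ on $\Omega=\{0,1\}^{\mathbb{N}}$ are not homeomorphic; that is, there is no homeomorphism $h:\Omega\to\Omega$ with $\mu_s = \mu_r\circ h^{-1}$ (i.e. $\mu_s(A)=\mu_r(h^{-1}(A))$ for all Borel $A\subseteq\Omega$).
   Context: $\Omega=\{0,1\}^{\mathbb{N}}$ is the Cantor set with the product topology. For $r\in[0,1]$, $\lambda_r$ is the probability measure on $\{0,1\}$ with $\lambda_r\{1\}=r$, $\lambda_r\{0\}=1-r$, and $\mu_r$ is the infinite product measure $\lambda_r^{\mathbb{N}}$ on $\Omega$ (the Bernoulli measure). Two Borel measures $\mu,\nu$ on $\Omega$ are called homeomorphic if there is a homeomorphism $h$ of $\Omega$ onto itself with $\nu=\mu\circ h^{-1}$. *)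

theory Defs
  imports "HOL-Probability.Probability"
begin

text \<open>The Cantor set \<Omega> = {0,1}^\<nat> is represented by the type nat \<Rightarrow> bool
  (True = 1, False = 0), with the product topology of discrete two-point spaces.\<close>

definition Cantor_top :: "(nat \<Rightarrow> bool) topology" where
  "Cantor_top = product_topology (\<lambda>_. discrete_topology (UNIV :: bool set)) UNIV"

definition bernoulli_measure :: "real \<Rightarrow> (nat \<Rightarrow> bool) measure" where
  "bernoulli_measure r = PiM UNIV (\<lambda>_. measure_pmf (bernoulli_pmf r))"

end

theory Submission
  imports Defs "HOL-Computational_Algebra.Computational_Algebra"
begin


definition cyl :: "nat \<Rightarrow> (nat \<Rightarrow> bool) \<Rightarrow> (nat \<Rightarrow> bool) set" where
  "cyl m w = {x. \<forall>i<m. x i = w i}"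

lemma bm_pps: "product_prob_space (\<lambda>_::nat. measure_pmf (bernoulli_pmf t))"
  unfolding product_prob_space_def product_sigma_finite_def product_prob_space_axioms_def
  by (simp add: prob_space_measure_pmf prob_space_imp_sigma_finite)

lemma bm_prob: "prob_space (bernoulli_measure t)"
  unfolding bernoulli_measure_def by (rule prob_space_PiM) (simp add: prob_space_measure_pmf)

lemma space_bm[simp]: "space (bernoulli_measure t) = UNIV"
  by (simp add: bernoulli_measure_def space_PiM)

lemma cyl_emb: "cyl m w = prod_emb UNIV (\<lambda>_. measure_pmf (bernoulli_pmf t)) {..<m} (PiE {..<m} (\<lambda>i. {w i}))"
  unfolding cyl_def prod_emb_def space_PiM by (rule set_eqI) (simp add: PiE_def extensional_def Pi_def)

lemma cyl_sets: "cyl m w \<in> sets (bernoulli_measure t)"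
  unfolding cyl_emb[of _ _ t] bernoulli_measure_def
  by (rule sets_PiM_I) auto

lemma cyl_measure:
  assumes "0 \<le> t" "t \<le> 1"
  shows "measure (bernoulli_measure t) (cyl m w) = (\<Prod>i<m. if w i then t else 1 - t)"
proof -
  interpret P: product_prob_space "\<lambda>_::nat. measure_pmf (bernoulli_pmf t)" UNIV by (rule bm_pps)
  have "emeasure (bernoulli_measure t) (cyl m w) = (\<Prod>i<m. emeasure (measure_pmf (bernoulli_pmf t)) {w i})"
    unfolding cyl_emb[of _ _ t] bernoulli_measure_def
    by (rule P.emeasure_PiM_emb) auto
  also have "\<dots> = (\<Prod>i<m. ennreal (if w i then t else 1 - t))"
    using assms by (intro prod.cong) (auto simp: emeasure_pmf_single)
  also have "\<dots> = ennreal (\<Prod>i<m. if w i then t else 1 - t)"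
    using assms by (intro prod_ennreal) auto
  finally show ?thesis unfolding measure_def using assms
    by (simp add: prod_nonneg)
qed

definition words :: "nat \<Rightarrow> (nat \<Rightarrow> bool) set" where
  "words m = {w. \<forall>i. w i \<longrightarrow> i < m}"

lemma finite_words: "finite (words m)"
proof -
  have "words m \<subseteq> (\<lambda>S i. i \<in> S) ` Pow {..<m}"
  proof
    fix w assume "w \<in> words m"
    then have "{i. w i} \<in> Pow {..<m}" "w = (\<lambda>i. i \<in> {i. w i})" by (auto simp: words_def)
    then show "w \<in> (\<lambda>S i. i \<in> S) ` Pow {..<m}" by blast
  qed
  then show ?thesis by (rule finite_subset) simp
qed

definition dep :: "nat \<Rightarrow> (nat \<Rightarrow> bool) set \<Rightarrow> bool" where
  "dep m V \<longleftrightarrow> (\<forall>x y. (\<forall>i<m. x i = y i) \<longrightarrow> (x \<in> V \<longleftrightarrow> y \<in> V))"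

lemma dep_union:
  assumes "dep m V"
  shows "V = (\<Union>w\<in>words m \<inter> V. cyl m w)"
proof
  show "V \<subseteq> (\<Union>w\<in>words m \<inter> V. cyl m w)"
  proof
    fix x assume x: "x \<in> V"
    let ?w = "\<lambda>i. i < m \<and> x i"
    have "?w \<in> V" using assms x unfolding dep_def by (metis (mono_tags, lifting))
    moreover have "?w \<in> words m" by (simp add: words_def)
    moreover have "x \<in> cyl m ?w" by (simp add: cyl_def)
    ultimately show "x \<in> (\<Union>w\<in>words m \<inter> V. cyl m w)" by blast
  qed
next
  show "(\<Union>w\<in>words m \<inter> V. cyl m w) \<subseteq> V"
    using assms unfolding dep_def cyl_def by blast
qed

lemma dep_disj: "disjoint_family_on (cyl m) (words m)"
  unfolding disjoint_family_on_def
proof (intro ballI impI)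
  fix w w' assume w: "w \<in> words m" "w' \<in> words m" "w \<noteq> w'"
  then obtain i where "w i \<noteq> w' i" by blast
  with w have "i < m" by (auto simp: words_def)
  with \<open>w i \<noteq> w' i\<close> show "cyl m w \<inter> cyl m w' = {}" by (auto simp: cyl_def)
qed

lemma dep_sets:
  assumes "dep m V"
  shows "V \<in> sets (bernoulli_measure t)"
proof -
  have "(\<Union>w\<in>words m \<inter> V. cyl m w) \<in> sets (bernoulli_measure t)"
    using finite_words cyl_sets by (intro sets.finite_UN) auto
  then show ?thesis using dep_union[OF assms] by simp
qed

lemma dep_measure:
  assumes "dep m V" "0 \<le> t" "t \<le> 1"
  shows "measure (bernoulli_measure t) V = (\<Sum>w\<in>words m \<inter> V. \<Prod>i<m. if w i then t else 1 - t)"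
proof -
  interpret prob_space "bernoulli_measure t" by (rule bm_prob)
  have "measure (bernoulli_measure t) V = measure (bernoulli_measure t) (\<Union>w\<in>words m \<inter> V. cyl m w)"
    using dep_union[OF assms(1)] by simp
  also have "\<dots> = (\<Sum>w\<in>words m \<inter> V. measure (bernoulli_measure t) (cyl m w))"
    using finite_words cyl_sets dep_disj
    by (intro finite_measure_finite_Union) (auto intro: disjoint_family_on_mono)
  also have "\<dots> = (\<Sum>w\<in>words m \<inter> V. \<Prod>i<m. if w i then t else 1 - t)"
    using assms by (intro sum.cong) (auto simp: cyl_measure)
  finally show ?thesis .
qed




lemma top_Cantor[simp]: "topspace Cantor_top = UNIV"
  unfolding Cantor_top_def by (simp add: PiE_UNIV_domain)

lemma cyl_PiE: "cyl n x = PiE UNIV (\<lambda>i. if i < n then {x i} else UNIV)"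
  unfolding cyl_def by (rule set_eqI) (simp add: PiE_def extensional_def Pi_def)

lemma cyl_open: "openin Cantor_top (cyl n x)"
proof -
  have "{i \<in> UNIV. (if i < n then {x i} else UNIV) \<noteq> topspace (discrete_topology (UNIV::bool set))} \<subseteq> {..<n}"
    by auto
  then have "finite {i \<in> UNIV. (if i < n then {x i} else UNIV) \<noteq> topspace (discrete_topology (UNIV::bool set))}"
    using finite_subset by blast
  then show ?thesis unfolding Cantor_top_def cyl_PiE
    by (subst openin_PiE_gen) simp
qed

lemma compact_Cantor: "compact_space Cantor_top"
  unfolding Cantor_top_def
  by (subst compact_space_product_topology) (simp add: compact_space_discrete_topology)

lemma open_cyl_sub:
  assumes "openin Cantor_top V" "x \<in> V"
  shows "\<exists>n. cyl n x \<subseteq> V"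
proof -
  have "\<forall>x \<in> V. \<exists>U. finite {i \<in> UNIV. U i \<noteq> topspace (discrete_topology (UNIV::bool set))} \<and>
                 (\<forall>i \<in> UNIV. openin (discrete_topology UNIV) (U i)) \<and> x \<in> Pi\<^sub>E UNIV U \<and> Pi\<^sub>E UNIV U \<subseteq> V"
    using assms(1) unfolding Cantor_top_def openin_product_topology_alt .
  from this[rule_format, OF assms(2)] obtain U where
    U: "finite {i \<in> UNIV. U i \<noteq> topspace (discrete_topology (UNIV::bool set))}"
    "x \<in> PiE UNIV U" "PiE UNIV U \<subseteq> V"
    by (elim exE conjE) simp
  have fin: "finite {i. U i \<noteq> UNIV}" using U(1) by simp
  obtain k where k: "{i. U i \<noteq> UNIV} \<subseteq> {..<k}"
    using finite_nat_bounded[OF fin] by blast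
  have "cyl k x \<subseteq> PiE UNIV U"
  proof
    fix y assume y: "y \<in> cyl k x"
    have "y i \<in> U i" for i
    proof (cases "U i = UNIV")
      case False
      then have "i < k" using k by blast
      then have "y i = x i" using y by (simp add: cyl_def)
      moreover have "x i \<in> U i" using U(2) by (simp add: PiE_def Pi_def)
      ultimately show ?thesis by simp
    qed simp
    then show "y \<in> PiE UNIV U" by (simp add: PiE_def extensional_def Pi_def)
  qed
  then show ?thesis using U(3) by blast
qed

lemma clopen_dep:
  assumes "openin Cantor_top V" "closedin Cantor_top V"
  shows "\<exists>m. dep m V"
proof -
  have cV: "compactin Cantor_top V"
    using compact_Cantor assms(2) by (rule closedin_compact_space)
  have "\<forall>x\<in>V. \<exists>n. cyl n x \<subseteq> V" using open_cyl_sub[OF assms(1)] by blast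
  from bchoice[OF this] obtain N where N: "\<forall>x\<in>V. cyl (N x) x \<subseteq> V" by (elim exE)
  define UU where "UU = (\<lambda>x. cyl (N x) x) ` V"
  have cov: "V \<subseteq> \<Union>UU" unfolding UU_def by (auto simp: cyl_def)
  have opn: "\<forall>B \<in> UU. openin Cantor_top B" unfolding UU_def using cyl_open by blast
  have "\<forall>\<U>. (\<forall>U \<in> \<U>. openin Cantor_top U) \<and> V \<subseteq> \<Union>\<U>
          \<longrightarrow> (\<exists>\<F>. finite \<F> \<and> \<F> \<subseteq> \<U> \<and> V \<subseteq> \<Union>\<F>)"
    using cV unfolding compactin_def by (rule conjunct2)
  from this[rule_format, of UU] opn cov obtain F where F: "finite F" "F \<subseteq> UU" "V \<subseteq> \<Union>F"
    by blast
  obtain G where G: "G \<subseteq> V" "finite G" "F = (\<lambda>x. cyl (N x) x) ` G"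
    using finite_subset_image[OF F(1) F(2)[unfolded UU_def]] by blast
  define m where "m = (\<Sum>g\<in>G. N g)"
  have le: "N g \<le> m" if "g \<in> G" for g
    unfolding m_def using G(2) that by (intro member_le_sum) auto
  have one: "y \<in> V" if xy: "\<forall>i<m. x i = y i" and x: "x \<in> V" for x y
  proof -
    obtain g where g: "g \<in> G" "x \<in> cyl (N g) g" using F(3) G(3) x by blast
    have "y \<in> cyl (N g) g" using g le[OF g(1)] xy by (auto simp: cyl_def)
    moreover have "cyl (N g) g \<subseteq> V" using N G(1) g(1) by blast
    ultimately show ?thesis by blast
  qed
  have "dep m V" unfolding dep_def
  proof (intro allI impI)
    fix x y :: "nat \<Rightarrow> bool" assume xy: "\<forall>i<m. x i = y i"
    then have yx: "\<forall>i<m. y i = x i" by simp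
    show "x \<in> V \<longleftrightarrow> y \<in> V" using one[OF xy] one[OF yx] by blast
  qed
  then show ?thesis by blast
qed

lemma homeo_facts:
  assumes "homeomorphic_map Cantor_top Cantor_top h"
  shows "bij h" "\<And>C. openin Cantor_top C \<Longrightarrow> openin Cantor_top (h ` C)"
        "\<And>C. closedin Cantor_top C \<Longrightarrow> closedin Cantor_top (h ` C)"
proof -
  have "h ` UNIV = UNIV" using homeomorphic_imp_surjective_map[OF assms] by simp
  moreover have "inj h" using homeomorphic_imp_injective_map[OF assms] by simp
  ultimately show "bij h" by (simp add: bij_def)
  show "\<And>C. openin Cantor_top C \<Longrightarrow> openin Cantor_top (h ` C)"
    using homeomorphic_map_openness[OF assms] by simp
  show "\<And>C. closedin Cantor_top C \<Longrightarrow> closedin Cantor_top (h ` C)"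
    using homeomorphic_map_closedness[OF assms] by simp
qed

lemma cyl_closed: "closedin Cantor_top (cyl n x)"
proof -
  have "openin Cantor_top (UNIV - cyl n x)"
  proof (subst openin_subopen, intro ballI)
    fix z assume z: "z \<in> UNIV - cyl n x"
    have "cyl n z \<subseteq> UNIV - cyl n x" using z by (auto simp: cyl_def)
    moreover have "z \<in> cyl n z" by (simp add: cyl_def)
    ultimately show "\<exists>T. openin Cantor_top T \<and> z \<in> T \<and> T \<subseteq> UNIV - cyl n x"
      using cyl_open by blast
  qed
  then show ?thesis by (simp add: closedin_def)
qed



lemma prime3: "prime (3::int)"
proof -
  have "{2..<3::int} = {2}" by auto
  then show ?thesis by (simp add: prime_int_iff')
qed

lemma no_rat_root:
  fixes \<rho> :: real
  assumes "12*\<rho>^3 - 24*\<rho>^2 + 18*\<rho> - 5 = 0" "\<rho> \<in> \<rat>"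
  shows False
proof -
  obtain a b :: int where ab: "b > 0" "coprime a b" "\<rho> = of_int a / of_int b"
    using Rats_cases'[OF assms(2)] by blast
  have bne: "real_of_int b \<noteq> 0" using ab(1) by simp
  have "real_of_int (12*a^3 - 24*a^2*b + 18*a*b^2 - 5*b^3) = (12*\<rho>^3 - 24*\<rho>^2 + 18*\<rho> - 5) * (of_int b)^3"
    using bne unfolding ab(3) by (simp add: field_simps power2_eq_square power3_eq_cube)
  then have "real_of_int (12*a^3 - 24*a^2*b + 18*a*b^2 - 5*b^3) = 0"
    using assms(1) by simp
  then have E: "12*a^3 - 24*a^2*b + 18*a*b^2 - 5*b^3 = 0"
    using of_int_eq_0_iff by blast
  have "3 dvd 5 * b^3"
  proof -
    have "5 * b^3 = 3 * (4*a^3 - 8*a^2*b + 6*a*b^2)" using E by algebra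
    then show ?thesis by simp
  qed
  then have "3 dvd b^3"
    using prime3 by (auto simp: prime_dvd_mult_iff dest: prime_dvd_multD)
  then have "3 dvd b" using prime3 prime_dvd_power by blast
  then obtain k where k: "b = 3 * k" by (elim dvdE)
  have "4 * a^3 = 3 * (8*a^2*k - 18*a*k^2 + 15*k^3)"
    using E unfolding k by algebra
  then have "3 dvd 4 * a^3" by simp
  then have "3 dvd a^3"
    using prime3 by (auto simp: prime_dvd_mult_iff dest: prime_dvd_multD)
  then have "3 dvd a" using prime3 prime_dvd_power by blast
  then have "is_unit (3::int)" using ab(2) \<open>3 dvd b\<close> coprime_common_divisor by blast
  then show False by simp
qed

lemma quad_zero:
  fixes r :: real and a b c :: int
  assumes fr: "12*r^3 - 24*r^2 + 18*r - 5 = 0"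
    and q: "of_int a * r^2 + of_int b * r + of_int c = 0"
  shows "a = 0 \<and> b = 0 \<and> c = 0"
proof -
  define u where "u = (12*c - 18*a)*a - b*(24*a + 12*b)"
  define v where "v = 5*a^2 - c*(24*a + 12*b)"
  let ?E1 = "of_int a * r^2 + of_int b * r + of_int c"
  let ?F = "12*r^3 - 24*r^2 + 18*r - 5"
  have "of_int u * r + of_int v = 12* of_int a*r*?E1 - (of_int a)^2*?F - (24* of_int a + 12* of_int b)*?E1"
    unfolding u_def v_def by (simp add: algebra_simps power2_eq_square power3_eq_cube)
  then have uv: "of_int u * r + of_int v = 0" using fr q by simp
  have u0: "u = 0"
  proof (rule ccontr)
    assume "u \<noteq> 0"
    then have "r = - of_int v / of_int u" using uv by (simp add: field_simps)
    then have "r \<in> \<rat>" by simp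
    then show False using no_rat_root fr by blast
  qed
  then have v0: "v = 0" using uv by simp
  show ?thesis
  proof (cases "a = 0")
    case True
    then have "b = 0" using u0 unfolding u_def by simp
    then show ?thesis using q True by simp
  next
    case False
    define l where "l = (24* of_int a + 12* of_int b) / (of_int a :: real)"
    have ar: "real_of_int a \<noteq> 0" using False by simp
    have la: "l * of_int a = 24* of_int a + 12* of_int b" unfolding l_def using ar by simp
    have U: "(12 * of_int c - 18 * of_int a) * of_int a - of_int b * (24 * of_int a + 12 * of_int b) = (0::real)"
      using arg_cong[OF u0[unfolded u_def], of real_of_int] by simp
    have V: "5 * (of_int a)^2 - of_int c * (24 * of_int a + 12 * of_int b) = (0::real)"
      using arg_cong[OF v0[unfolded v_def], of real_of_int] by simp
    have "l * of_int b = ((24 * of_int a + 12 * of_int b) * of_int b) / of_int a"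
      unfolding l_def by simp
    also have "(24 * of_int a + 12 * of_int b) * of_int b = (12 * of_int c - 18 * of_int a) * (of_int a :: real)"
      using U by (simp add: algebra_simps)
    finally have lb: "l * of_int b = 12 * of_int c - 18 * of_int a"
      using ar by simp
    have "l * of_int c = ((24 * of_int a + 12 * of_int b) * of_int c) / of_int a"
      unfolding l_def by simp
    also have "(24 * of_int a + 12 * of_int b) * of_int c = 5 * of_int a * (of_int a :: real)"
      using V by (simp add: algebra_simps power2_eq_square)
    finally have lc: "l * of_int c = 5 * of_int a"
      using ar by simp
    define \<rho> where "\<rho> = l / 12"
    have "(12*\<rho> - l) * (of_int a * \<rho>^2 + of_int b * \<rho> + of_int c)
        = 12* of_int a*\<rho>^3 + 12* of_int b*\<rho>^2 + 12* of_int c*\<rho> - (l* of_int a)*\<rho>^2 - (l* of_int b)*\<rho> - l* of_int c"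
      by (simp add: algebra_simps power2_eq_square power3_eq_cube)
    also have "\<dots> = of_int a * (12*\<rho>^3 - 24*\<rho>^2 + 18*\<rho> - 5)"
      unfolding la lb lc by (simp add: algebra_simps)
    finally have "of_int a * (12*\<rho>^3 - 24*\<rho>^2 + 18*\<rho> - 5) = 0"
      unfolding \<rho>_def by simp
    then have "12*\<rho>^3 - 24*\<rho>^2 + 18*\<rho> - 5 = 0" using ar by simp
    moreover have "\<rho> \<in> \<rat>" unfolding \<rho>_def l_def by simp
    ultimately show ?thesis using no_rat_root by blast
  qed
qed



abbreviation ip :: "int poly \<Rightarrow> real poly" where "ip p \<equiv> map_poly of_int p"

lemma ip_add: "ip (p + q) = ip p + ip q"
  by (rule poly_eqI) (simp add: coeff_map_poly)
lemma ip_diff: "ip (p - q) = ip p - ip q"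
  by (rule poly_eqI) (simp add: coeff_map_poly)
lemma ip_mult: "ip (p * q) = ip p * ip q"
  by (rule poly_eqI) (simp add: coeff_map_poly coeff_mult)
lemma ip_smult: "ip (smult c p) = smult (of_int c) (ip p)"
  by (rule poly_eqI) (simp add: coeff_map_poly)
lemma ip_monom: "ip (monom c n) = monom (of_int c) n"
  by (simp add: map_poly_monom)
lemma ip_const: "ip [:c:] = [:of_int c:]"
  by (rule poly_eqI) (simp add: coeff_map_poly coeff_pCons split: nat.split)
lemma degree_ip: "degree (ip p) = degree p"
  by (rule degree_map_poly) simp

lemma poly_le2:
  fixes p :: "'a::comm_semiring_1 poly"
  assumes "degree p \<le> 2"
  shows "poly p x = coeff p 0 + coeff p 1 * x + coeff p 2 * x^2"
proof -
  have "poly p x = (\<Sum>i\<le>degree p. coeff p i * x ^ i)" by (rule poly_altdef)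
  also have "\<dots> = (\<Sum>i\<le>2. coeff p i * x ^ i)"
    using assms by (intro sum.mono_neutral_left) (auto simp: coeff_eq_0)
  also have "\<dots> = coeff p 0 + coeff p 1 * x + coeff p 2 * x^2"
    by (simp add: numeral_2_eq_2)
  finally show ?thesis .
qed

definition Fp :: "int poly" where "Fp = [:-5, 18, -24, 12:]"

lemma poly_Fp: "poly (ip Fp) x = 12*x^3 - 24*x^2 + 18*x - 5"
  by (simp add: Fp_def map_poly_pCons algebra_simps power2_eq_square power3_eq_cube)

lemma degree_Fp: "degree Fp = 3" by (simp add: Fp_def)
lemma coeff_Fp3: "coeff Fp 3 = 12" by (simp add: Fp_def numeral_3_eq_3)
lemma Fp10: "poly Fp 10 = 25 * 391" by (simp add: Fp_def)

lemma key:
  fixes r :: real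
  assumes fr: "12*r^3 - 24*r^2 + 18*r - 5 = 0"
  shows "poly (ip p) r = 0 \<Longrightarrow> 25 dvd poly p (10::int)"
proof (induction "degree p" arbitrary: p rule: less_induct)
  case less
  show ?case
  proof (cases "degree p \<le> 2")
    case True
    have "poly (ip p) r = of_int (coeff p 0) + of_int (coeff p 1) * r + of_int (coeff p 2) * r^2"
      using poly_le2[of "ip p" r] True by (simp add: degree_ip coeff_map_poly)
    then have "of_int (coeff p 2) * r^2 + of_int (coeff p 1) * r + of_int (coeff p 0) = 0"
      using less.prems by simp
    then have z: "coeff p 2 = 0 \<and> coeff p 1 = 0 \<and> coeff p 0 = 0"
      using quad_zero[OF fr] by blast
    have "poly p 10 = 0"
      using poly_le2[of p 10] True z by simp
    then show ?thesis by simp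
  next
    case False
    define n where "n = degree p"
    define c where "c = lead_coeff p"
    define q where "q = smult 12 p - monom c (n - 3) * Fp"
    have n3: "n \<ge> 3" using False n_def by simp
    have d1: "degree (monom c (n - 3) * Fp) \<le> n"
      using degree_mult_le[of "monom c (n - 3)" Fp] degree_monom_le[of c "n - 3"] n3
      by (simp add: degree_Fp)
    have dq: "degree q \<le> n"
      unfolding q_def by (rule degree_diff_le) (use degree_smult_le[of 12 p] n_def d1 in auto)
    have "coeff (monom c (n - 3) * Fp) n = c * 12"
      using n3 by (simp add: coeff_monom_mult coeff_Fp3)
    then have cq: "coeff q n = 0"
      unfolding q_def c_def n_def by simp
    have "degree q < n"
    proof (rule ccontr)
      assume "\<not> degree q < n"
      then have "degree q = n" using dq by simp
      then have "q = 0" using cq by (metis leading_coeff_0_iff)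
      then show False using \<open>degree q = n\<close> n3 by simp
    qed
    moreover have "poly (ip q) r = 0"
      unfolding q_def ip_diff ip_smult ip_mult ip_monom
      using less.prems by (simp add: poly_Fp fr)
    ultimately have "25 dvd poly q 10" using less.hyps n_def by blast
    moreover have "poly q 10 = 12 * poly p 10 - c * 10^(n-3) * (25 * 391)"
      unfolding q_def by (simp add: poly_monom Fp10)
    ultimately have h: "25 dvd 12 * poly p 10"
      by (metis dvd_diff_commute dvd_add_right_iff diff_add_cancel dvd_mult mult.commute dvd_triv_left)
    have d: "25 dvd 23 * (12 * poly p 10) - 25 * (11 * poly p 10)"
      by (intro dvd_diff dvd_mult h dvd_triv_left)
    have e: "23 * (12 * poly p 10) - 25 * (11 * poly p 10) = poly p 10" by simp
    show ?thesis using d unfolding e .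
  qed
qed



definition R :: "real \<Rightarrow> real \<Rightarrow> int \<Rightarrow> bool" where
  "R r x k \<longleftrightarrow> (\<exists>p. x = poly (ip p) r \<and> 25 dvd (poly p 10 - k))"

lemma R_add: "R r x k \<Longrightarrow> R r y l \<Longrightarrow> R r (x + y) (k + l)"
  unfolding R_def
proof (elim exE conjE)
  fix p q assume "x = poly (ip p) r" "25 dvd poly p 10 - k" "y = poly (ip q) r" "25 dvd poly q 10 - l"
  have e: "poly (p + q) 10 - (k + l) = (poly p 10 - k) + (poly q 10 - l)" by simp
  have "25 dvd poly (p + q) 10 - (k + l)" unfolding e using \<open>25 dvd poly p 10 - k\<close> \<open>25 dvd poly q 10 - l\<close> by (rule dvd_add)
  moreover have "x + y = poly (ip (p + q)) r" using \<open>x = poly (ip p) r\<close> \<open>y = poly (ip q) r\<close> by (simp add: ip_add)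
  ultimately show "\<exists>pq. x + y = poly (ip pq) r \<and> 25 dvd poly pq 10 - (k + l)" by blast
qed

lemma R_mult: "R r x k \<Longrightarrow> R r y l \<Longrightarrow> R r (x * y) (k * l)"
  unfolding R_def
proof (elim exE conjE)
  fix p q assume a: "x = poly (ip p) r" "25 dvd poly p 10 - k" "y = poly (ip q) r" "25 dvd poly q 10 - l"
  have e: "poly p 10 * poly q 10 - k * l = poly p 10 * (poly q 10 - l) + l * (poly p 10 - k)"
    by (simp add: algebra_simps)
  have "25 dvd poly p 10 * poly q 10 - k * l"
    unfolding e using a by (intro dvd_add dvd_mult) auto
  then show "\<exists>pq. x * y = poly (ip pq) r \<and> 25 dvd poly pq 10 - (k * l)"
    using a by (intro exI[of _ "p * q"]) (auto simp: ip_mult)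
qed

lemma R_int: "R r (of_int c) c"
  unfolding R_def by (intro exI[of _ "[:c:]"]) (simp add: ip_const)

lemma R_var: "R r r 10"
  unfolding R_def by (intro exI[of _ "monom 1 1"]) (simp add: ip_monom poly_monom)

lemma R_cong: "R r x k \<Longrightarrow> 25 dvd (k - l) \<Longrightarrow> R r x l"
  unfolding R_def
proof (elim exE conjE)
  fix p assume "x = poly (ip p) r" "25 dvd poly p 10 - k" "25 dvd k - l"
  moreover have "poly p 10 - l = (poly p 10 - k) + (k - l)" by simp
  ultimately show "\<exists>p. x = poly (ip p) r \<and> 25 dvd poly p 10 - l"
    using dvd_add by metis
qed

lemma R_sum: "finite A \<Longrightarrow> (\<And>a. a \<in> A \<Longrightarrow> R r (f a) (g a)) \<Longrightarrow> R r (\<Sum>a\<in>A. f a) (\<Sum>a\<in>A. g a)"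
proof (induction A rule: finite_induct)
  case empty
  then show ?case using R_int[of r 0] by simp
next
  case (insert a A)
  then show ?case by (simp add: R_add)
qed

lemma R_prod: "finite A \<Longrightarrow> (\<And>a. a \<in> A \<Longrightarrow> R r (f a) (g a)) \<Longrightarrow> R r (\<Prod>a\<in>A. f a) (\<Prod>a\<in>A. g a)"
proof (induction A rule: finite_induct)
  case empty
  then show ?case using R_int[of r 1] by simp
next
  case (insert a A)
  then show ?case by (simp add: R_mult)
qed

lemma R_uniq:
  assumes fr: "12*r^3 - 24*r^2 + 18*r - 5 = 0"
  shows "R r x k \<Longrightarrow> R r x l \<Longrightarrow> 25 dvd (k - l)"
  unfolding R_def
proof (elim exE conjE)
  fix p q assume a: "x = poly (ip p) r" "25 dvd poly p 10 - k" "x = poly (ip q) r" "25 dvd poly q 10 - l"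
  then have "poly (ip (p - q)) r = 0" by (simp add: ip_diff)
  then have "25 dvd poly (p - q) 10" by (rule key[OF fr])
  then have h1: "25 dvd poly p 10 - poly q 10" by simp
  have e: "k - l = (poly p 10 - poly q 10) - (poly p 10 - k) + (poly q 10 - l)" by simp
  show "25 dvd (k - l)" unfolding e by (rule dvd_add[OF dvd_diff[OF h1 a(2)] a(4)])
qed

lemma R_1r: "R r (1 - r) (-9)"
proof -
  have "R r (of_int 1 + of_int (-1) * r) (1 + (-1) * 10)"
    using R_add[OF R_int[of r 1] R_mult[OF R_int[of r "-1"] R_var[of r]]] .
  then show ?thesis by simp
qed

lemma R_s: "R r (2 * r * (1 - r)) (-180)"
proof -
  have "R r (of_int 2 * r * (1 - r)) (2 * 10 * (-9))"
    using R_mult[OF R_mult[OF R_int[of r 2] R_var[of r]] R_1r[of r]] .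
  then show ?thesis by simp
qed

lemma R_1s: "R r (1 - 2 * r * (1 - r)) 181"
proof -
  have "R r (of_int 1 + of_int (-1) * (2 * r * (1 - r))) (1 + (-1) * (-180))"
    using R_add[OF R_int[of r 1] R_mult[OF R_int[of r "-1"] R_s[of r]]] .
  then show ?thesis by simp
qed



definition T :: "nat \<Rightarrow> (nat \<Rightarrow> bool) \<Rightarrow> int" where
  "T m w = (\<Prod>i<m. if w i then -180 else 181)"
definition ee :: "nat \<Rightarrow> nat \<Rightarrow> bool" where "ee j = (\<lambda>i. i = j)"
definition zero :: "nat \<Rightarrow> bool" where "zero = (\<lambda>_. False)"

lemma pow5: "5 dvd (a::int) - 1 \<Longrightarrow> 5 dvd a^n - 1"
proof (induction n)
  case 0 then show ?case by simp
next
  case (Suc n)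
  have e: "a^Suc n - 1 = a * (a^n - 1) + (a - 1)" by (simp add: algebra_simps)
  show ?case unfolding e using Suc by (intro dvd_add dvd_mult) auto
qed

lemma T_zero: "5 dvd T m zero - 1"
proof -
  have "T m zero = 181^m" by (simp add: T_def zero_def)
  moreover have "5 dvd (181::int)^m - 1" by (rule pow5) simp
  ultimately show ?thesis by simp
qed

lemma T_true: "i < m \<Longrightarrow> w i \<Longrightarrow> 5 dvd T m w"
proof -
  assume a: "i < m" "w i"
  have "T m w = (if w i then -180 else 181) * (\<Prod>k\<in>{..<m} - {i}. if w k then -180 else 181)"
    unfolding T_def using a by (intro prod.remove) auto
  then have "T m w = 5 * (-36 * (\<Prod>k\<in>{..<m} - {i}. if w k then -180 else 181))"
    using a by simp
  then show ?thesis by (metis dvd_triv_left)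
qed

lemma T_two: "i < m \<Longrightarrow> j < m \<Longrightarrow> i \<noteq> j \<Longrightarrow> w i \<Longrightarrow> w j \<Longrightarrow> 25 dvd T m w"
proof -
  assume a: "i < m" "j < m" "i \<noteq> j" "w i" "w j"
  let ?f = "\<lambda>k. if w k then -180 else (181::int)"
  have "T m w = ?f i * prod ?f ({..<m} - {i})"
    unfolding T_def using a by (intro prod.remove) auto
  also have "prod ?f ({..<m} - {i}) = ?f j * prod ?f ({..<m} - {i} - {j})"
    using a by (intro prod.remove) auto
  finally have "T m w = 25 * (1296 * prod ?f ({..<m} - {i} - {j}))"
    using a by simp
  then show ?thesis by (metis dvd_triv_left)
qed

lemma T_e: "j < m \<Longrightarrow> 25 dvd T m (ee j) - 20"
proof -
  assume a: "j < m"
  let ?f = "\<lambda>k. if ee j k then -180 else (181::int)"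
  have "T m (ee j) = ?f j * prod ?f ({..<m} - {j})"
    unfolding T_def using a by (intro prod.remove) auto
  also have "prod ?f ({..<m} - {j}) = prod (\<lambda>_. 181) ({..<m} - {j})"
    by (intro prod.cong) (auto simp: ee_def)
  also have "\<dots> = 181 ^ (m - 1)" using a by simp
  finally have e: "T m (ee j) = -180 * 181 ^ (m - 1)" by (simp add: ee_def)
  have "5 dvd (181::int) ^ (m - 1) - 1" by (rule pow5) simp
  then obtain k where k: "(181::int) ^ (m - 1) - 1 = 5 * k" by (elim dvdE)
  have "T m (ee j) - 20 = 25 * (-36 * k - 8)"
    unfolding e using k by (simp add: algebra_simps)
  then show ?thesis by (metis dvd_triv_left)
qed

lemma word_cases:
  assumes "w \<in> words m"
  shows "w = zero \<or> (\<exists>j<m. w = ee j) \<or> (\<exists>i j. i < m \<and> j < m \<and> i \<noteq> j \<and> w i \<and> w j)"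
proof (cases "w = zero")
  case False
  then obtain i where i: "w i" by (auto simp: zero_def)
  then have im: "i < m" using assms by (auto simp: words_def)
  show ?thesis
  proof (cases "w = ee i")
    case False
    then obtain j where "w j \<noteq> ee i j" by blast
    then have "w j" "j \<noteq> i" using i by (auto simp: ee_def)
    then have "j < m" using assms by (auto simp: words_def)
    then show ?thesis using im i \<open>w j\<close> \<open>j \<noteq> i\<close> by blast
  qed (use im in blast)
qed simp

lemma zero_words: "zero \<in> words m" by (simp add: zero_def words_def)

lemma comb_a:
  assumes "25 dvd (\<Sum>w\<in>words m \<inter> V. T m w) - P" "5 dvd P"
  shows "zero \<notin> V"
proof
  assume z: "zero \<in> V"
  let ?W = "words m \<inter> V"
  have fin: "finite ?W" using finite_words by simp
  have "(\<Sum>w\<in>?W. T m w) = T m zero + (\<Sum>w\<in>?W - {zero}. T m w)"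
    using fin z zero_words by (intro sum.remove) auto
  moreover have "5 dvd (\<Sum>w\<in>?W - {zero}. T m w)"
  proof (rule dvd_sum)
    fix w assume w: "w \<in> ?W - {zero}"
    then have "(\<exists>j<m. w = ee j) \<or> (\<exists>i j. i < m \<and> j < m \<and> i \<noteq> j \<and> w i \<and> w j)"
      using word_cases[of w m] by auto
    then obtain i where "i < m" "w i" by (auto simp: ee_def)
    then show "5 dvd T m w" by (rule T_true)
  qed
  moreover have "5 dvd (\<Sum>w\<in>?W. T m w) - P"
    using assms(1) by (rule dvd_trans[rotated]) simp
  ultimately have "5 dvd T m zero + (\<Sum>w\<in>?W - {zero}. T m w) - P - (\<Sum>w\<in>?W - {zero}. T m w) + P - (T m zero - 1)"
    using assms(2) T_zero[of m] by (metis dvd_add dvd_diff)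
  then show False by simp
qed

lemma comb_b:
  assumes S: "25 dvd (\<Sum>w\<in>words m \<inter> V. T m w) - 10"
    and z: "zero \<notin> V" and e: "\<forall>j<m. ee j \<in> V \<longrightarrow> ee j = y0"
  shows False
proof -
  let ?W = "words m \<inter> V"
  let ?S = "\<Sum>w\<in>?W. T m w"
  have fin: "finite ?W" using finite_words by simp
  have rest: "25 dvd T m w" if w: "w \<in> ?W" "w \<noteq> y0" for w
  proof -
    have "w \<noteq> zero" using w z by auto
    moreover have "\<not> (\<exists>j<m. w = ee j)" using w e by auto
    ultimately obtain i j where "i < m" "j < m" "i \<noteq> j" "w i" "w j"
      using word_cases[of w m] w by blast
    then show ?thesis by (rule T_two)
  qed
  show False
  proof (cases "y0 \<in> ?W")
    case False
    have "25 dvd ?S" using rest False by (intro dvd_sum) auto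
    then have "25 dvd ?S - (?S - 10)" using S by (rule dvd_diff)
    then show False by simp
  next
    case True
    have sp: "?S = T m y0 + (\<Sum>w\<in>?W - {y0}. T m w)"
      using fin True by (intro sum.remove) auto
    have "25 dvd (\<Sum>w\<in>?W - {y0}. T m w)" using rest by (intro dvd_sum) auto
    then have d: "25 dvd ?S - T m y0" unfolding sp by simp
    have "y0 \<noteq> zero" using True z by auto
    then have "(\<exists>j<m. y0 = ee j) \<or> (\<exists>i j. i < m \<and> j < m \<and> i \<noteq> j \<and> y0 i \<and> y0 j)"
      using word_cases[of y0 m] True by auto
    then show False
    proof
      assume "\<exists>j<m. y0 = ee j"
      then obtain j where "j < m" "y0 = ee j" by blast
      then have h: "25 dvd T m y0 - 20" using T_e by simp
      have "25 dvd (?S - T m y0) + (T m y0 - 20) - (?S - 10)"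
        by (rule dvd_diff[OF dvd_add[OF d h] S])
      then show False by simp
    next
      assume "\<exists>i j. i < m \<and> j < m \<and> i \<noteq> j \<and> y0 i \<and> y0 j"
      then have h: "25 dvd T m y0" using T_two by blast
      have "25 dvd (?S - T m y0) + T m y0 - (?S - 10)"
        by (rule dvd_diff[OF dvd_add[OF d h] S])
      then show False by simp
    qed
  qed
qed


lemma meas_cong:
  fixes r :: real
  assumes fr: "12*r^3 - 24*r^2 + 18*r - 5 = 0" and r01: "0 < r" "r < 1"
    and dm: "dep m V" and M1: "M \<ge> 1"
    and eq: "measure (bernoulli_measure (2*r*(1-r))) V = measure (bernoulli_measure r) (cyl M (ee 0))"
  shows "25 dvd (\<Sum>w\<in>words m \<inter> V. T m w) - 10"
proof -
  let ?s = "2*r*(1-r)"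
  have s0: "0 \<le> ?s" using r01 by simp
  have "0 \<le> (2*r - 1)^2" by simp
  moreover have "(2*r - 1)^2 = 4*r^2 - 4*r + 1" by (simp add: algebra_simps power2_eq_square)
  moreover have "?s = 2*r - 2*r^2" by (simp add: algebra_simps power2_eq_square)
  ultimately have s1: "?s \<le> 1" by linarith
  have A: "R r (measure (bernoulli_measure ?s) V) (\<Sum>w\<in>words m \<inter> V. T m w)"
    unfolding dep_measure[OF dm s0 s1] T_def
  proof (intro R_sum R_prod)
    fix w i
    show "R r (if w i then ?s else 1 - ?s) (if w i then -180 else 181)"
      by (cases "w i") (simp_all add: R_s R_1s)
  qed (use finite_words in auto)
  have B: "R r (measure (bernoulli_measure r) (cyl M (ee 0))) (\<Prod>i<M. if ee 0 i then 10 else -9)"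
    unfolding cyl_measure[OF less_imp_le[OF r01(1)] less_imp_le[OF r01(2)]]
  proof (intro R_prod)
    fix i
    show "R r (if ee 0 i then r else 1 - r) (if ee 0 i then 10 else -9)"
      by (cases "ee 0 i") (simp_all add: R_var R_1r)
  qed auto
  have d1: "25 dvd (\<Sum>w\<in>words m \<inter> V. T m w) - (\<Prod>i<M. if ee 0 i then 10 else -9)"
    using R_uniq[OF fr A[unfolded eq] B] .
  obtain M' where M': "M = Suc M'" using M1 by (cases M) auto
  have "(\<Prod>i<M. if ee 0 i then 10 else -9) = (10::int) * (\<Prod>i<M'. if ee 0 (Suc i) then 10 else -9)"
    unfolding M' prod.lessThan_Suc_shift by (simp add: ee_def)
  also have "(\<Prod>i<M'. if ee 0 (Suc i) then 10 else -9) = (\<Prod>i<M'. (-9::int))"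
    by (intro prod.cong) (auto simp: ee_def)
  finally have pe: "(\<Prod>i<M. if ee 0 i then 10 else -9) = (10::int) * (-9)^M'" by simp
  have "5 dvd (-9::int)^M' - 1" by (rule pow5) simp
  then obtain k where k: "(-9::int)^M' - 1 = 5 * k" by (elim dvdE)
  have "(\<Prod>i<M. if ee 0 i then 10 else -9) - 10 = (25::int) * (2 * k)"
    unfolding pe using k by (simp add: algebra_simps)
  then have d2: "25 dvd (\<Prod>i<M. if ee 0 i then 10 else -9) - (10::int)" by (metis dvd_triv_left)
  have e: "(\<Sum>w\<in>words m \<inter> V. T m w) - 10 = ((\<Sum>w\<in>words m \<inter> V. T m w) - (\<Prod>i<M. if ee 0 i then 10 else -9)) + ((\<Prod>i<M. if ee 0 i then 10 else -9) - 10)"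
    by simp
  show ?thesis unfolding e by (rule dvd_add[OF d1 d2])
qed

theorem mainTheorem1:
  fixes r s :: real
  assumes "0 < r" "r < 1" "0 < s" "s < 1"
    and "s = 2 * r * (1 - r)"
    and "r = 3 * s * (1 - s)^2 + 3 * s^2 * (1 - s)"
  shows "\<not> (\<exists>h. homeomorphic_map Cantor_top Cantor_top h \<and>
            (\<forall>A \<in> sets (bernoulli_measure s).
               emeasure (bernoulli_measure s) A = emeasure (bernoulli_measure r) (h -` A)))"
proof
  assume "\<exists>h. homeomorphic_map Cantor_top Cantor_top h \<and>
            (\<forall>A \<in> sets (bernoulli_measure s).
               emeasure (bernoulli_measure s) A = emeasure (bernoulli_measure r) (h -` A))"
  then obtain h where hom: "homeomorphic_map Cantor_top Cantor_top h"
    and hm: "\<forall>A \<in> sets (bernoulli_measure s). emeasure (bernoulli_measure s) A = emeasure (bernoulli_measure r) (h -` A)"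
    by blast
  have "r * (12*r^3 - 24*r^2 + 18*r - 5) = r - (3 * s * (1 - s)^2 + 3 * s^2 * (1 - s))"
    unfolding assms(5) by (simp add: algebra_simps power2_eq_square power3_eq_cube)
  then have "r * (12*r^3 - 24*r^2 + 18*r - 5) = 0" using assms(6) by simp
  then have fr: "12*r^3 - 24*r^2 + 18*r - 5 = 0" using assms(1) by simp
  have bh: "bij h" and ho: "\<And>C. openin Cantor_top C \<Longrightarrow> openin Cantor_top (h ` C)"
    and hc: "\<And>C. closedin Cantor_top C \<Longrightarrow> closedin Cantor_top (h ` C)"
    using homeo_facts[OF hom] by auto
  have transfer: "\<exists>m. dep m (h ` cyl n x) \<and>
      measure (bernoulli_measure (2*r*(1-r))) (h ` cyl n x) = measure (bernoulli_measure r) (cyl n x)" for n x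
  proof -
    obtain m where dm: "dep m (h ` cyl n x)"
      using clopen_dep[OF ho[OF cyl_open] hc[OF cyl_closed]] by blast
    have "h ` cyl n x \<in> sets (bernoulli_measure s)" by (rule dep_sets[OF dm])
    then have "emeasure (bernoulli_measure s) (h ` cyl n x) = emeasure (bernoulli_measure r) (h -` (h ` cyl n x))"
      using hm by blast
    also have "h -` (h ` cyl n x) = cyl n x"
      using bh by (simp add: bij_def inj_vimage_image_eq)
    finally have "measure (bernoulli_measure s) (h ` cyl n x) = measure (bernoulli_measure r) (cyl n x)"
      unfolding measure_def by simp
    then show ?thesis using dm assms(5) by blast
  qed
  define y0 where "y0 = h (ee 0)"
  define g where "g = inv h"
  have hg: "h (g y) = y" for y using bh unfolding g_def by (simp add: bij_def surj_f_inv_f)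
  have gh: "g (h x) = x" for x using bh unfolding g_def by (simp add: bij_def inv_f_f)
  obtain m1 where dm1: "dep m1 (h ` cyl 1 (ee 0))"
    and eq1: "measure (bernoulli_measure (2*r*(1-r))) (h ` cyl 1 (ee 0)) = measure (bernoulli_measure r) (cyl 1 (ee 0))"
    using transfer by blast
  have z1: "zero \<notin> h ` cyl 1 (ee 0)"
    using comb_a[OF meas_cong[OF fr assms(1,2) dm1 _ eq1]] by simp
  have far: "ee j \<notin> h ` cyl 1 (ee 0)" if "m1 \<le> j" for j
  proof -
    have "\<forall>i<m1. ee j i = zero i" using that by (auto simp: ee_def zero_def)
    then show ?thesis using dm1 z1 unfolding dep_def by blast
  qed
  define J where "J = {j. j < m1 \<and> ee j \<in> h ` cyl 1 (ee 0) \<and> ee j \<noteq> y0}"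
  have finJ: "finite J" unfolding J_def by simp
  have "\<forall>j\<in>J. \<exists>k. g (ee j) k \<noteq> ee 0 k"
  proof
    fix j assume "j \<in> J"
    then have "ee j \<noteq> y0" unfolding J_def by blast
    then have "g (ee j) \<noteq> ee 0" using hg[of "ee j"] unfolding y0_def by metis
    then show "\<exists>k. g (ee j) k \<noteq> ee 0 k" by blast
  qed
  from bchoice[OF this] obtain K where K: "\<forall>j\<in>J. g (ee j) (K j) \<noteq> ee 0 (K j)" by (elim exE)
  define M where "M = Suc (\<Sum>j\<in>J. K j)"
  have KM: "K j < M" if "j \<in> J" for j
  proof -
    have "K j \<le> (\<Sum>j\<in>J. K j)" using finJ that by (intro member_le_sum) auto
    then show ?thesis unfolding M_def by simp
  qed
  obtain m where dm: "dep m (h ` cyl M (ee 0))"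
    and eq: "measure (bernoulli_measure (2*r*(1-r))) (h ` cyl M (ee 0)) = measure (bernoulli_measure r) (cyl M (ee 0))"
    using transfer by blast
  have S: "25 dvd (\<Sum>w\<in>words m \<inter> h ` cyl M (ee 0). T m w) - 10"
    using meas_cong[OF fr assms(1,2) dm _ eq] M_def by simp
  have z: "zero \<notin> h ` cyl M (ee 0)"
    using comb_a[OF S] by simp
  have sub: "cyl M (ee 0) \<subseteq> cyl 1 (ee 0)" unfolding cyl_def M_def by auto
  have e: "\<forall>j<m. ee j \<in> h ` cyl M (ee 0) \<longrightarrow> ee j = y0"
  proof (intro allI impI)
    fix j assume "j < m" and jin: "ee j \<in> h ` cyl M (ee 0)"
    show "ee j = y0"
    proof (rule ccontr)
      assume ne: "ee j \<noteq> y0"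
      obtain x where x: "x \<in> cyl M (ee 0)" "ee j = h x" using jin by blast
      have "ee j \<in> h ` cyl 1 (ee 0)" using x sub by blast
      then have "j < m1" using far by (meson not_le)
      then have jJ: "j \<in> J" unfolding J_def using ne \<open>ee j \<in> h ` cyl 1 (ee 0)\<close> by blast
      have "g (ee j) = x" using x gh by simp
      then have "x (K j) \<noteq> ee 0 (K j)" using K jJ by blast
      moreover have "x (K j) = ee 0 (K j)" using x(1) KM[OF jJ] unfolding cyl_def by blast
      ultimately show False by blast
    qed
  qed
  show False using comb_b[OF S z e] .
qed

end
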